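(* Let $m\ge 1$ and let $\Sigma=\begin{pmatrix}2I_{m+1} & I_{m+1}\\ I_{m+1} & 2I_{m+1}\end{pmatrix}\in\mathbb{R}^{(2m+2)\times(2m+2)}$, where $I_{m+1}$ is the $(m+1)\times(m+1)$ identity matrix. Then every $(2m+1)\times(2m+1)$ principal submatrix of $\Sigma$ belongs to $F_{2m+1,m}$, but $\Sigma\notin F_{2m+2,m}$.
   Context: For integers $p\ge 1$, $m\ge 1$, $F_{p,m}=\{\Delta+\Gamma\Gamma^t : \Delta \text{ a positive definite diagonal } p\times p \text{ matrix},\ \Gamma\in\mathbb{R}^{p\times m}\}$. *)

theory Defs
  imports "Jordan_Normal_Form.Matrix" "Jordan_Normal_Form.DL_Submatrix"
begin

definition F_set :: "nat \<Rightarrow> nat \<Rightarrow> real mat set" where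
  "F_set p m = {\<Delta> + \<Gamma> * \<Gamma>\<^sup>T | \<Delta> \<Gamma>.
      \<Delta> \<in> carrier_mat p p \<and> diagonal_mat \<Delta> \<and> (\<forall>i<p. \<Delta> $$ (i,i) > 0) \<and>
      \<Gamma> \<in> carrier_mat p m}"

definition Sigma_mat :: "nat \<Rightarrow> real mat" where
  "Sigma_mat m = four_block_mat (2 \<cdot>\<^sub>m 1\<^sub>m (m+1)) (1\<^sub>m (m+1)) (1\<^sub>m (m+1)) (2 \<cdot>\<^sub>m 1\<^sub>m (m+1))"

end

theory Submission
  imports Defs "Jordan_Normal_Form.Determinant"
begin


lemma Sigma_dim[simp]: "dim_row (Sigma_mat m) = 2*m+2" "dim_col (Sigma_mat m) = 2*m+2"
  by (auto simp: Sigma_mat_def)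

lemma Sigma_entry:
  assumes "a < 2*m+2" "b < 2*m+2"
  shows "Sigma_mat m $$ (a,b) = (if a = b then 2 else if a mod (Suc m) = b mod (Suc m) then 1 else 0)"
  using assms by (auto simp: Sigma_mat_def mod_if)

lemma part2:
  assumes "m \<ge> 1"
  shows "Sigma_mat m \<notin> F_set (2*m+2) m"
proof
  assume "Sigma_mat m \<in> F_set (2*m+2) m"
  then obtain D G where S: "Sigma_mat m = D + G * G\<^sup>T" and D: "D \<in> carrier_mat (2*m+2) (2*m+2)"
    "diagonal_mat D" and G: "G \<in> carrier_mat (2*m+2) m"
    unfolding F_set_def by blast
  define n where "n = Suc m"
  define A where "A = mat n n (\<lambda>(i,k). if k < m then G $$ (i,k) else 0)"
  define B where "B = mat n n (\<lambda>(j,k). if k < m then G $$ (n+j,k) else 0)"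
  have key: "(\<Sum>k<m. G $$ (i,k) * G $$ (n+j,k)) = (if i = j then 1 else 0)" if "i < n" "j < n" for i j
  proof -
    have "Sigma_mat m $$ (i, n+j) = D $$ (i,n+j) + (G * G\<^sup>T) $$ (i,n+j)"
      using S D G that n_def by (simp)
    moreover have "D $$ (i,n+j) = 0" using D that n_def unfolding diagonal_mat_def by auto
    moreover have "(G * G\<^sup>T) $$ (i,n+j) = (\<Sum>k<m. G $$ (i,k) * G $$ (n+j,k))"
      using G that n_def by (simp add: scalar_prod_def lessThan_atLeast0)
    moreover have "Sigma_mat m $$ (i, n+j) = (if i = j then 1 else 0)"
      using that n_def by (subst Sigma_entry) (auto simp: mod_if)
    ultimately show ?thesis by simp
  qed
  have AB: "A * B\<^sup>T = 1\<^sub>m n"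
  proof (rule eq_matI)
    fix i j assume ij: "i < dim_row (1\<^sub>m n)" "j < dim_col (1\<^sub>m n)"
    have "(A * B\<^sup>T) $$ (i,j) = (\<Sum>k<n. (if k < m then G $$ (i,k) else 0) * (if k < m then G $$ (n+j,k) else 0))"
      using ij by (simp add: A_def B_def scalar_prod_def lessThan_atLeast0)
    also have "\<dots> = (\<Sum>k<m. G $$ (i,k) * G $$ (n+j,k))"
      by (simp add: n_def)
    also have "\<dots> = 1\<^sub>m n $$ (i,j)" using key ij by simp
    finally show "(A * B\<^sup>T) $$ (i,j) = 1\<^sub>m n $$ (i,j)" .
  qed (auto simp: A_def B_def)
  have "det A = 0"
  proof -
    have A: "A \<in> carrier_mat n n" by (simp add: A_def)
    have "A *\<^sub>v unit_vec n m = 0\<^sub>v n"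
    proof (rule eq_vecI)
      fix i assume "i < dim_vec (0\<^sub>v n :: real vec)"
      then show "(A *\<^sub>v unit_vec n m) $ i = 0\<^sub>v n $ i"
        by (simp add: A_def scalar_prod_def unit_vec_def n_def)
    qed (simp add: A_def)
    moreover have "unit_vec n m \<noteq> (0\<^sub>v n :: real vec)"
      by (metis index_unit_vec(1) index_zero_vec(1) lessI n_def zero_neq_one)
    ultimately show ?thesis using det_0_iff_vec_prod_zero_field[OF A] by (metis unit_vec_carrier)
  qed
  moreover have "det (A * B\<^sup>T) = det A * det (B\<^sup>T)"
    by (rule det_mult) (auto simp: A_def B_def)
  ultimately show False using AB by simp
qed

lemma three_mod:
  fixes x y z n :: nat
  assumes "x < 2*n" "y < 2*n" "z < 2*n" "x mod n = y mod n" "x mod n = z mod n" "x \<noteq> y" "x \<noteq> z" "y \<noteq> z"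
  shows False
proof -
  have "n > 0" using assms by auto
  have d: "x div n < 2" "y div n < 2" "z div n < 2" using assms \<open>n>0\<close> by (auto simp: div_less_iff_less_mult mult.commute)
  have eqd: "u div n = v div n \<Longrightarrow> u mod n = v mod n \<Longrightarrow> u = v" for u v
    by (metis div_mult_mod_eq)
  have "x div n = y div n \<or> x div n = z div n \<or> y div n = z div n" using d by linarith
  then show False using eqd assms by metis
qed


lemma aux1: "(x::nat) \<le> m \<Longrightarrow> z \<le> m \<Longrightarrow> x \<noteq> z \<Longrightarrow> k < m \<Longrightarrow>
  (x = (if k < z then k else Suc k)) = (k = (if x < z then x else x - 1))" by auto
lemma aux2: "(if k < z then k else Suc k) \<noteq> (z::nat)" by auto

lemma gsum:
  fixes m r a b :: nat
  defines "n \<equiv> Suc m"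
  defines "p \<equiv> (\<lambda>k. if k < r mod n then k else Suc k)"
  shows "(\<Sum>k<m. (if a mod n = p k then 1 else 0) * (if b mod n = p k then 1 else 0) :: real)
         = (if a mod n = b mod n \<and> a mod n \<noteq> r mod n then 1 else 0)"
proof (cases "a mod n = b mod n \<and> a mod n \<noteq> r mod n")
  case True
  define k0 where "k0 = (if a mod n < r mod n then a mod n else a mod n - 1)"
  have n: "a mod n \<le> m" "r mod n \<le> m" by (auto simp: n_def less_Suc_eq_le[symmetric])
  have k0: "k0 < m" using True n unfolding k0_def by auto
  have "\<And>k. k < m \<Longrightarrow> (a mod n = p k) = (k = k0)"
    unfolding k0_def p_def using aux1[OF n] True by blast
  then have "(\<Sum>k<m. (if a mod n = p k then 1 else 0) * (if b mod n = p k then 1 else 0) :: real)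
      = (\<Sum>k<m. if k = k0 then 1 else 0)" using True by (intro sum.cong) auto
  also have "\<dots> = 1" using k0 by simp
  finally show ?thesis using True by simp
next
  case False
  have h: "(if a mod n = p k then 1 else 0) * (if b mod n = p k then 1 else 0) = (0::real)" for k
  proof -
    have "p k \<noteq> r mod n" unfolding p_def by (rule aux2)
    then show ?thesis using False by auto
  qed
  have "(\<Sum>k<m. (if a mod n = p k then 1 else 0) * (if b mod n = p k then 1 else 0) :: real) = 0"
    by (rule sum.neutral) (use h in blast)
  then show ?thesis using False by (simp only: if_False)
qed

lemma part1:
  assumes I: "I \<subseteq> {0..<2*m+2}" "card I = 2*m+1"
  shows "submatrix (Sigma_mat m) I I \<in> F_set (2*m+1) m"
proof -
  obtain r where r: "r < 2*m+2" "r \<notin> I"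
  proof -
    have "I \<noteq> {0..<2*m+2}" using I by auto
    then obtain r where "r \<in> {0..<2*m+2}" "r \<notin> I" using I by blast
    then show ?thesis using that by auto
  qed
  define n where "n = Suc m"
  define p where "p = (\<lambda>k. if k < r mod n then k else Suc k)"
  define g where "g = (\<lambda>a k. if a mod n = p k then 1 else 0 :: real)"
  define G where "G = mat (2*m+1) m (\<lambda>(i,k). g (pick I i) k)"
  define D where "D = mat (2*m+1) (2*m+1) (\<lambda>(i,j). if i = j then (if pick I i mod n = r mod n then 2 else 1) else 0 :: real)"
  have cI: "{i. i < dim_row (Sigma_mat m) \<and> i \<in> I} = I" "{i. i < dim_col (Sigma_mat m) \<and> i \<in> I} = I"
    using I by auto
  have cI': "{i. i < Suc (Suc (2*m)) \<and> i \<in> I} = I" using I by auto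
  have "submatrix (Sigma_mat m) I I = D + G * G\<^sup>T"
  proof (rule eq_matI)
    fix i j assume ij: "i < dim_row (D + G * G\<^sup>T)" "j < dim_col (D + G * G\<^sup>T)"
    then have ij': "i < card I" "j < card I" using I by (auto simp: D_def G_def)
    define a where "a = pick I i"
    define b where "b = pick I j"
    have ab: "a \<in> I" "b \<in> I" using pick_in_set_le ij' a_def b_def by auto
    then have ab2: "a < 2*m+2" "b < 2*m+2" "a \<noteq> r" "b \<noteq> r" using I r by auto
    have eq: "(a = b) = (i = j)"
    proof
      assume "a = b"
      show "i = j"
      proof (rule ccontr)
        assume "i \<noteq> j"
        then consider "i < j" | "j < i" by linarith
        then show False
        proof cases
          case 1 then show False using pick_mono_le[OF ij'(2) 1] \<open>a = b\<close> a_def b_def by simp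
        next
          case 2 then show False using pick_mono_le[OF ij'(1) 2] \<open>a = b\<close> a_def b_def by simp
        qed
      qed
    qed (simp add: a_def b_def)
    have lhs: "submatrix (Sigma_mat m) I I $$ (i,j) = Sigma_mat m $$ (a,b)"
      using ij' cI a_def b_def by (simp add: submatrix_index)
    have "(G * G\<^sup>T) $$ (i,j) = (\<Sum>k<m. g a k * g b k)"
      using ij' I by (simp add: G_def scalar_prod_def lessThan_atLeast0 a_def b_def)
    also have "\<dots> = (if a mod n = b mod n \<and> a mod n \<noteq> r mod n then 1 else 0)"
      unfolding g_def p_def n_def by (rule gsum)
    finally have gg: "(G * G\<^sup>T) $$ (i,j) = (if a mod n = b mod n \<and> a mod n \<noteq> r mod n then 1 else 0)" .
    have Dij: "D $$ (i,j) = (if a = b then (if a mod n = r mod n then 2 else 1) else 0)"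
      using ij' I eq by (simp add: D_def a_def)
    have three: "False" if "a \<noteq> b" "a mod n = b mod n" "a mod n = r mod n"
      using three_mod[of a n b r] ab2 r(1) that unfolding n_def by auto
    have add: "(D + G * G\<^sup>T) $$ (i,j) = D $$ (i,j) + (G * G\<^sup>T) $$ (i,j)"
      using ij' I by (simp add: D_def G_def)
    show "submatrix (Sigma_mat m) I I $$ (i,j) = (D + G * G\<^sup>T) $$ (i,j)"
      unfolding add lhs gg Dij Sigma_entry[OF ab2(1,2)]
      using three unfolding n_def by (cases "a = b") auto
  qed (auto simp: D_def G_def dim_submatrix cI cI' I)
  moreover have "D \<in> carrier_mat (2*m+1) (2*m+1) \<and> diagonal_mat D \<and> (\<forall>i<2*m+1. D $$ (i,i) > 0) \<and>
      G \<in> carrier_mat (2*m+1) m"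
    by (auto simp: D_def G_def diagonal_mat_def)
  ultimately show ?thesis unfolding F_set_def by blast
qed

theorem mainTheorem8:
  fixes m :: nat
  assumes "m \<ge> 1"
  shows "(\<forall>I. I \<subseteq> {0..<2*m+2} \<and> card I = 2*m+1 \<longrightarrow>
            submatrix (Sigma_mat m) I I \<in> F_set (2*m+1) m)
         \<and> Sigma_mat m \<notin> F_set (2*m+2) m"
  using part1 part2[OF assms] by blast

end
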